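(* Let $P$ be a distribution on $\mathcal X\times\mathcal Y$, where every $\mathbf x\in\mathcal X\subseteq\mathbb R^d$ satisfies $\|\mathbf x\|\le1$ and $\mathcal Y=\{-1,+1\}$ or $[-1,1]$, and let $(\mathbf x_1,y_1),\dots,(\mathbf x_n,y_n)$ be i.i.d. from $P$. Let $R>0$, $\mathscr W=\{\mathbf w\in\mathbb R^d:\|\mathbf w\|\le R\}$, let $\ell:\mathbb R\to\mathbb R_+$ be a convex loss, $\alpha$-exp-concave on $|z|\le R$, with $|\ell'(z)|\le G$. Let $\mathcal L(\mathbf w)=\mathrm E[\ell(y\mathbf w^\top\mathbf x)]$, $\mathbf w_*\in\arg\min_{\mathscr W}\mathcal L$, and let $\widehat{\mathbf w}_*$ be a solution of $\min_{\mathbf w\in\mathscr W}\frac1n\sum_{i=1}^n\ell(y_i\mathbf w^\top\mathbf x_i)$. Let $\rho(\mathbf w)=\frac1{2R}\sqrt{\mathrm E[(\mathbf x^\top(\mathbf w-\mathbf w_* ))^2]}$ and $\widehat\rho=\rho(\widehat{\mathbf w}_* )$. Then for any $t>0$, with probability at least $1-2me^{-t}$, where $m=\lceil\log n\rceil$, \[ \mathcal L(\widehat{\mathbf w}_* )-\mathcal L(\mathbf w_* )\le GR\left(26\left[\widehat\rho\sqrt{\frac{\widetilde t}{n}}+\frac{\widetilde t}{n}\right]+6\widehat\rho\sqrt{\frac{\widetilde t}{n}}+\frac{2\widetilde t}{n}\right)+\frac{3\widetilde t}{n}, \] where $\widetilde t=t+2+d\log n$.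
   Context: $\alpha$-exp-concave means $z\mapsto\exp(-\alpha\ell(z))$ is concave for some $\alpha>0$. Expectations are over $(\mathbf x,y)\sim P$. *)

theory Defs
  imports "HOL-Probability.Probability"
begin

definition exp_concave_on :: "real \<Rightarrow> real set \<Rightarrow> (real \<Rightarrow> real) \<Rightarrow> bool" where
  "exp_concave_on \<alpha> S loss \<longleftrightarrow> \<alpha> > 0 \<and> concave_on S (\<lambda>z. exp (- \<alpha> * loss z))"

definition pop_risk :: "((real^'d) \<times> real) measure \<Rightarrow> (real \<Rightarrow> real) \<Rightarrow> real^'d \<Rightarrow> real" where
  "pop_risk P loss w = (\<integral>z. loss (snd z * (w \<bullet> fst z)) \<partial>P)"

definition emp_risk :: "nat \<Rightarrow> (nat \<Rightarrow> (real^'d) \<times> real) \<Rightarrow> (real \<Rightarrow> real) \<Rightarrow> real^'d \<Rightarrow> real" where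
  "emp_risk n S loss w = (1 / real n) * (\<Sum>i<n. loss (snd (S i) * (w \<bullet> fst (S i))))"

definition rho :: "((real^'d) \<times> real) measure \<Rightarrow> real \<Rightarrow> real^'d \<Rightarrow> real^'d \<Rightarrow> real" where
  "rho P R wstar w = (1 / (2 * R)) * sqrt (\<integral>z. (fst z \<bullet> (w - wstar))\<^sup>2 \<partial>P)"

end

theory Submission
  imports Defs
begin

lemma exp_le_quad_neg: fixes y :: real assumes "y \<le> 0" shows "exp y \<le> 1 + y + y\<^sup>2"
proof -
  define h where "h = (\<lambda>x::real. 1 + x + x\<^sup>2 / 2 - exp x)"
  have d: "\<And>x. (h has_real_derivative (1 + x - exp x)) (at x)"
    unfolding h_def by (auto intro!: derivative_eq_intros simp: power2_eq_square)
  have "h 0 \<le> h y"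
  proof (cases "y = 0")
    case False
    with assms have y0: "y < 0" by simp
    from MVT2[OF y0, of h "\<lambda>x. 1 + x - exp x"] d obtain z where
      z: "y < z" "z < 0" "h 0 - h y = (0 - y) * (1 + z - exp z)" by metis
    have a: "1 + z - exp z \<le> 0" using exp_ge_add_one_self[of z] by linarith
    have b: "0 \<le> 0 - y" using y0 by simp
    have "(0 - y) * (1 + z - exp z) \<le> 0" by (rule mult_nonneg_nonpos[OF b a])
    thus ?thesis using z(3) by linarith
  qed simp
  hence "exp y \<le> 1 + y + y\<^sup>2/2" by (simp add: h_def)
  moreover have "0 \<le> y\<^sup>2" by simp
  ultimately show ?thesis by linarith
qed

lemma exp_le_quad: fixes y :: real assumes "y \<le> 1" shows "exp y \<le> 1 + y + y\<^sup>2"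
proof (cases "y \<le> 0")
  case True thus ?thesis by (rule exp_le_quad_neg)
next
  case False thus ?thesis using exp_bound[of y] assms by simp
qed
lemma lipschitz_loss:
  fixes loss dloss :: "real \<Rightarrow> real"
  assumes "\<And>z. (loss has_real_derivative dloss z) (at z)" "\<And>z. \<bar>dloss z\<bar> \<le> G"
  shows "\<bar>loss a - loss b\<bar> \<le> G * \<bar>a - b\<bar>"
proof -
  have *: "\<bar>loss a - loss b\<bar> \<le> G * \<bar>a - b\<bar>" if "a < b" for a b
  proof -
    from MVT2[OF that, of loss dloss] assms(1) obtain z where
      "loss b - loss a = (b - a) * dloss z" by metis
    hence "\<bar>loss a - loss b\<bar> = \<bar>(b - a) * dloss z\<bar>" by (simp add: abs_minus_commute)
    hence "\<bar>loss a - loss b\<bar> = \<bar>b - a\<bar> * \<bar>dloss z\<bar>" by (simp add: abs_mult)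
    also have "\<dots> \<le> \<bar>b - a\<bar> * G" by (intro mult_left_mono assms(2)) auto
    finally show ?thesis by (simp add: abs_minus_commute mult.commute)
  qed
  show ?thesis
  proof (cases a b rule: linorder_cases)
    case greater with *[of b a] show ?thesis by (simp add: abs_minus_commute)
  qed (use * in auto)
qed

lemma grid_coord:
  fixes x R :: real and n :: nat
  assumes "n \<ge> 1" "R > 0" "\<bar>x\<bar> \<le> R"
  shows "\<exists>k<n. \<bar>x - (- R + (2 * real k + 1) * R / real n)\<bar> \<le> R / real n"
proof -
  define s where "s = (x + R) / (2 * R) * real n"
  have xR: "0 \<le> x + R" "x + R \<le> 2 * R" using assms by auto
  have s0: "0 \<le> s" using assms xR by (simp add: s_def)
  have "(x + R) / (2 * R) \<le> 1" using xR assms by simp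
  hence sn: "s \<le> real n" unfolding s_def using mult_right_mono[of "(x + R) / (2 * R)" 1 "real n"] by simp
  define k where "k = min (n - 1) (nat \<lfloor>s\<rfloor>)"
  have kn: "k < n" using assms by (simp add: k_def)
  have ks: "\<bar>s - real k - 1/2\<bar> \<le> 1/2"
  proof (cases "nat \<lfloor>s\<rfloor> \<le> n - 1")
    case True
    hence "k = nat \<lfloor>s\<rfloor>" by (simp add: k_def)
    hence rk: "real k = of_int \<lfloor>s\<rfloor>" using s0 by simp
    have f1: "of_int \<lfloor>s\<rfloor> \<le> s" by (rule of_int_floor_le)
    have f2: "s < of_int \<lfloor>s\<rfloor> + 1" by (rule real_of_int_floor_add_one_gt)
    have "0 \<le> s - real k" "s - real k \<le> 1" using f1 f2 rk by linarith+
    thus ?thesis unfolding abs_le_iff by linarith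
  next
    case False
    hence "k = n - 1" by (simp add: k_def)
    hence k: "real k = real n - 1" using assms by simp
    have "n - 1 < nat \<lfloor>s\<rfloor>" using False by simp
    hence "int (n - 1) < \<lfloor>s\<rfloor>" by simp
    hence "int (n - 1) + 1 \<le> \<lfloor>s\<rfloor>" by simp
    hence "of_int (int (n - 1) + 1) \<le> s" by (simp add: le_floor_iff)
    hence "real n \<le> s" using assms by (simp add: of_nat_diff)
    hence "s = real n" using sn by simp
    thus ?thesis using k by simp
  qed
  have "x - (- R + (2 * real k + 1) * R / real n) = (2 * R / real n) * (s - real k - 1/2)"
    using assms by (simp add: s_def field_simps)
  hence "\<bar>x - (- R + (2 * real k + 1) * R / real n)\<bar> = (2 * R / real n) * \<bar>s - real k - 1/2\<bar>"
    using assms by (simp add: abs_mult)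
  also have "\<dots> \<le> (2 * R / real n) * (1/2)" using ks assms by (intro mult_left_mono) auto
  finally show ?thesis using kn by auto
qed

definition grid :: "nat \<Rightarrow> real \<Rightarrow> (real^'d) set" where
  "grid n R = (\<lambda>k. \<chi> i. - R + (2 * real (k i) + 1) * R / real n) ` (PiE UNIV (\<lambda>_. {..<n}))"

lemma grid_finite: "finite (grid n R)"
  unfolding grid_def by (intro finite_imageI finite_PiE) auto

lemma grid_card: "card (grid n R :: (real^'d) set) \<le> n ^ CARD('d)"
proof -
  have f: "finite (PiE (UNIV::'d set) (\<lambda>_. {..<n}))" by (intro finite_PiE) auto
  have "card (grid n R :: (real^'d) set) \<le> card (PiE (UNIV::'d set) (\<lambda>_. {..<n}))"
    unfolding grid_def by (rule card_image_le[OF f])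
  also have "\<dots> = n ^ CARD('d)" by (simp add: card_PiE)
  finally show ?thesis .
qed

lemma grid_cover:
  fixes w :: "real^'d"
  assumes "n \<ge> 1" "R > 0" "norm w \<le> R"
  shows "\<exists>v\<in>grid n R. norm (w - v) \<le> real CARD('d) * R / real n"
proof -
  have "\<forall>i. \<exists>k. k < n \<and> \<bar>w$i - (- R + (2 * real k + 1) * R / real n)\<bar> \<le> R / real n"
  proof
    fix i
    have "\<bar>w$i\<bar> \<le> R" using component_le_norm_cart[of w i] assms by linarith
    from grid_coord[OF assms(1,2) this]
    show "\<exists>k. k < n \<and> \<bar>w$i - (- R + (2 * real k + 1) * R / real n)\<bar> \<le> R / real n" .
  qed
  from choice[OF this] obtain k where k: "\<forall>i. k i < n \<and> \<bar>w$i - (- R + (2 * real (k i) + 1) * R / real n)\<bar> \<le> R / real n"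
    by (elim exE)
  define v :: "real^'d" where "v = (\<chi> i. - R + (2 * real (k i) + 1) * R / real n)"
  have "k \<in> PiE UNIV (\<lambda>_. {..<n})" using k by (simp add: PiE_iff)
  hence "v \<in> grid n R" unfolding grid_def v_def by (rule imageI)
  moreover have "norm (w - v) \<le> real CARD('d) * R / real n"
  proof -
    have "norm (w - v) \<le> (\<Sum>i\<in>UNIV. \<bar>(w - v)$i\<bar>)" by (rule norm_le_l1_cart)
    also have "\<dots> \<le> (\<Sum>i\<in>(UNIV::'d set). R / real n)"
    proof (rule sum_mono)
      fix i
      have "(w - v)$i = w$i - (- R + (2 * real (k i) + 1) * R / real n)" by (simp add: v_def)
      thus "\<bar>(w - v)$i\<bar> \<le> R / real n" using spec[OF k, of i] by (simp only:)
    qed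
    finally show ?thesis by simp
  qed
  ultimately show ?thesis by blast
qed

lemma choose_lambda:
  fixes b \<sigma> u :: real
  assumes "b > 0" "\<sigma> \<ge> 0" "u > 0"
  shows "\<exists>l>0. l * b \<le> 1 \<and> - l * (2 * \<sigma> * u + 2 * b * u\<^sup>2) + l\<^sup>2 * \<sigma>\<^sup>2 \<le> - u\<^sup>2"
proof (cases "\<sigma> \<ge> b * u")
  case True
  hence s0: "\<sigma> > 0" using assms by (smt (verit) mult_pos_pos)
  define l where "l = u / \<sigma>"
  have "l > 0" using s0 assms by (simp add: l_def)
  moreover have "l * b \<le> 1" using True s0 by (simp add: l_def field_simps mult.commute)
  moreover have "- l * (2 * \<sigma> * u + 2 * b * u\<^sup>2) + l\<^sup>2 * \<sigma>\<^sup>2 = - u\<^sup>2 - 2 * b * u^3 / \<sigma>"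
    using s0 by (simp add: l_def field_simps power2_eq_square power3_eq_cube)
  moreover have "0 \<le> 2 * b * u^3 / \<sigma>" using assms s0 by simp
  ultimately show ?thesis by (intro exI[of _ l]) auto
next
  case False
  define l where "l = 1 / b"
  have "l > 0" using assms by (simp add: l_def)
  moreover have "l * b \<le> 1" using assms by (simp add: l_def)
  moreover have "\<sigma>\<^sup>2 \<le> (b * u)\<^sup>2" using False assms by (intro power_mono) auto
  hence "l\<^sup>2 * \<sigma>\<^sup>2 \<le> u\<^sup>2" using assms by (simp add: l_def field_simps power2_eq_square)
  moreover have "- l * (2 * \<sigma> * u + 2 * b * u\<^sup>2) \<le> - 2 * u\<^sup>2"
    using assms by (simp add: l_def field_simps power2_eq_square)
  ultimately show ?thesis by (intro exI[of _ l]) auto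
qed

lemma tail_bound:
  fixes P :: "'a measure" and X :: "'a \<Rightarrow> real" and n :: nat
  assumes P: "prob_space P" and Xm: "X \<in> borel_measurable P"
    and Xb: "AE z in P. \<bar>X z\<bar> \<le> b" and b: "b > 0"
    and X0: "(\<integral>z. X z \<partial>P) = 0" and X2: "(\<integral>z. (X z)\<^sup>2 \<partial>P) \<le> \<sigma>\<^sup>2" and \<sigma>: "\<sigma> \<ge> 0"
    and s: "s > 0" and n: "n \<ge> 1"
  shows "measure (PiM {..<n} (\<lambda>_. P))
           {S \<in> space (PiM {..<n} (\<lambda>_. P)).
              real n * (2 * \<sigma> * sqrt (s / real n) + 2 * b * (s / real n)) \<le> (\<Sum>i<n. X (S i))}
         \<le> exp (- s)"
proof -
  interpret P: prob_space P by (rule P)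
  define Q where "Q = PiM {..<n} (\<lambda>_. P)"
  interpret Q: prob_space Q unfolding Q_def by (intro prob_space_PiM P)
  interpret PS: product_sigma_finite "\<lambda>_::nat. P"
    unfolding product_sigma_finite_def using P.sigma_finite_measure_axioms by simp
  define u where "u = sqrt (s / real n)"
  have u: "u > 0" using s n by (simp add: u_def)
  have u2: "u\<^sup>2 = s / real n" using s n by (simp add: u_def)
  define \<epsilon> where "\<epsilon> = 2 * \<sigma> * u + 2 * b * u\<^sup>2"
  obtain l where l: "l > 0" "l * b \<le> 1" "- l * \<epsilon> + l\<^sup>2 * \<sigma>\<^sup>2 \<le> - u\<^sup>2"
    using choose_lambda[OF b \<sigma> u] unfolding \<epsilon>_def by blast
  have intX: "integrable P X" by (rule P.integrable_const_bound[OF _ Xm]) (use Xb in simp)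
  have intX2: "integrable P (\<lambda>z. (X z)\<^sup>2)"
  proof (rule P.integrable_const_bound[where B = "b\<^sup>2"])
    show "AE z in P. norm ((X z)\<^sup>2) \<le> b\<^sup>2"
      using Xb by eventually_elim (simp, metis abs_ge_zero power2_abs power_mono)
  qed (use Xm in measurable)
  have intE: "integrable P (\<lambda>z. exp (l * X z))"
  proof (rule P.integrable_const_bound[where B = "exp (l * b)"])
    show "AE z in P. norm (exp (l * X z)) \<le> exp (l * b)"
      using Xb
    proof eventually_elim
      case (elim z) thus ?case using l(1) by (simp add: abs_le_iff)
    qed
  qed (use Xm in measurable)
  have mgf: "(\<integral>\<^sup>+z. ennreal (exp (l * X z)) \<partial>P) \<le> ennreal (exp (l\<^sup>2 * \<sigma>\<^sup>2))"
  proof -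
    have "(\<integral>\<^sup>+z. ennreal (exp (l * X z)) \<partial>P) = ennreal (\<integral>z. exp (l * X z) \<partial>P)"
      by (rule nn_integral_eq_integral[OF intE]) simp
    also have "(\<integral>z. exp (l * X z) \<partial>P) \<le> (\<integral>z. 1 + l * X z + l\<^sup>2 * (X z)\<^sup>2 \<partial>P)"
    proof (rule integral_mono_AE[OF intE])
      show "integrable P (\<lambda>z. 1 + l * X z + l\<^sup>2 * (X z)\<^sup>2)"
        using intX intX2 by auto
      show "AE z in P. exp (l * X z) \<le> 1 + l * X z + l\<^sup>2 * (X z)\<^sup>2"
        using Xb
      proof eventually_elim
        case (elim z)
        have "l * X z \<le> l * b" using l(1) elim by (intro mult_left_mono) auto
        hence "l * X z \<le> 1" using l(2) by linarith
        from exp_le_quad[OF this] show ?case by (simp add: power_mult_distrib)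
      qed
    qed
    also have "(\<integral>z. 1 + l * X z + l\<^sup>2 * (X z)\<^sup>2 \<partial>P) = 1 + l * (\<integral>z. X z \<partial>P) + l\<^sup>2 * (\<integral>z. (X z)\<^sup>2 \<partial>P)"
      using intX intX2 by (simp add: P.prob_space)
    also have "\<dots> \<le> 1 + l\<^sup>2 * \<sigma>\<^sup>2" using X0 X2 by (simp add: mult_left_mono)
    also have "\<dots> \<le> exp (l\<^sup>2 * \<sigma>\<^sup>2)" by (rule exp_ge_add_one_self)
    finally show ?thesis by (simp add: ennreal_leI)
  qed
  have fm: "(\<lambda>S. (\<Sum>i<n. X (S i))) \<in> borel_measurable Q" unfolding Q_def using Xm by measurable
  have "emeasure Q {S \<in> space Q. real n * \<epsilon> \<le> (\<Sum>i<n. X (S i))}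
        \<le> ennreal (exp (- l * (real n * \<epsilon>))) *
           (\<integral>\<^sup>+S. ennreal (exp (l * (\<Sum>i<n. X (S i)))) * indicator (space Q) S \<partial>Q)"
    by (rule Chernoff_ineq_nn_integral_ge[OF l(1)]) (use fm in auto)
  also have "(\<integral>\<^sup>+S. ennreal (exp (l * (\<Sum>i<n. X (S i)))) * indicator (space Q) S \<partial>Q)
           = (\<integral>\<^sup>+S. (\<Prod>i\<in>{..<n}. ennreal (exp (l * X (S i)))) \<partial>Q)"
    by (intro nn_integral_cong)
       (simp add: sum_distrib_left exp_sum prod_ennreal)
  also have "\<dots> = (\<Prod>i\<in>{..<n}. (\<integral>\<^sup>+z. ennreal (exp (l * X z)) \<partial>P))"
    unfolding Q_def by (rule PS.product_nn_integral_prod) (use Xm in auto)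
  also have "ennreal (exp (- l * (real n * \<epsilon>))) * \<dots> \<le> ennreal (exp (- l * (real n * \<epsilon>))) * (\<Prod>i\<in>{..<n}. ennreal (exp (l\<^sup>2 * \<sigma>\<^sup>2)))"
    by (intro mult_left_mono prod_mono_ennreal mgf) auto
  also have "\<dots> = ennreal (exp (real n * (- l * \<epsilon> + l\<^sup>2 * \<sigma>\<^sup>2)))"
  proof -
    have "(\<Prod>i\<in>{..<n}. ennreal (exp (l\<^sup>2 * \<sigma>\<^sup>2))) = ennreal (exp (l\<^sup>2 * \<sigma>\<^sup>2) ^ n)"
      by (simp add: ennreal_power)
    also have "exp (l\<^sup>2 * \<sigma>\<^sup>2) ^ n = exp (real n * (l\<^sup>2 * \<sigma>\<^sup>2))" by (rule exp_of_nat_mult[symmetric])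
    finally have "ennreal (exp (- l * (real n * \<epsilon>))) * (\<Prod>i\<in>{..<n}. ennreal (exp (l\<^sup>2 * \<sigma>\<^sup>2)))
        = ennreal (exp (- l * (real n * \<epsilon>)) * exp (real n * (l\<^sup>2 * \<sigma>\<^sup>2)))"
      by (simp add: ennreal_mult)
    also have "exp (- l * (real n * \<epsilon>)) * exp (real n * (l\<^sup>2 * \<sigma>\<^sup>2)) = exp (real n * (- l * \<epsilon> + l\<^sup>2 * \<sigma>\<^sup>2))"
      by (simp add: exp_add[symmetric] algebra_simps)
    finally show ?thesis .
  qed
  also have "\<dots> \<le> ennreal (exp (- s))"
  proof (intro ennreal_leI)
    have "real n * (- l * \<epsilon> + l\<^sup>2 * \<sigma>\<^sup>2) \<le> real n * (- u\<^sup>2)" using l(3) by (intro mult_left_mono) auto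
    also have "\<dots> = - s" using u2 n by simp
    finally show "exp (real n * (- l * \<epsilon> + l\<^sup>2 * \<sigma>\<^sup>2)) \<le> exp (- s)" by simp
  qed
  finally have "emeasure Q {S \<in> space Q. real n * \<epsilon> \<le> (\<Sum>i<n. X (S i))} \<le> ennreal (exp (- s))" .
  hence "measure Q {S \<in> space Q. real n * \<epsilon> \<le> (\<Sum>i<n. X (S i))} \<le> exp (- s)"
    by (simp add: Q.emeasure_eq_measure)
  thus ?thesis unfolding Q_def \<epsilon>_def u_def using u2 unfolding u_def by simp
qed

lemma meas_P:
  fixes P :: "'a::topological_space measure" and g :: "'a \<Rightarrow> real"
  assumes "sets P = sets borel" "continuous_on UNIV g"
  shows "g \<in> borel_measurable P"
proof -
  have "g \<in> borel_measurable borel" by (rule borel_measurable_continuous_onI[OF assms(2)])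
  thus ?thesis by (subst measurable_cong_sets[OF assms(1) refl])
qed

lemma pred_P:
  fixes P :: "'a::topological_space measure" and Q :: "'a \<Rightarrow> bool"
  assumes "sets P = sets borel" "closed {z. Q z}"
  shows "Measurable.pred P Q"
proof -
  have "{z. Q z} \<in> sets borel" using assms(2) by (rule borel_closed)
  hence "{z. Q z} \<in> sets P" using assms(1) by simp
  moreover have "space P = UNIV" using sets_eq_imp_space_eq[OF assms(1)] by simp
  ultimately have "{z \<in> space P. Q z} \<in> sets P" by simp
  thus ?thesis unfolding Measurable.pred_def .
qed

lemma loss_comp_bound:
  fixes loss dloss :: "real \<Rightarrow> real" and u w x :: "real^'d" and y :: real
  assumes "\<And>z. (loss has_real_derivative dloss z) (at z)" "\<And>z. \<bar>dloss z\<bar> \<le> G"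
    and "norm x \<le> 1" "\<bar>y\<bar> \<le> 1"
  shows "\<bar>loss (y * (u \<bullet> x)) - loss (y * (w \<bullet> x))\<bar> \<le> G * norm (u - w)"
proof -
  have G: "G \<ge> 0" using assms(2)[of 0] by linarith
  have "\<bar>loss (y * (u \<bullet> x)) - loss (y * (w \<bullet> x))\<bar> \<le> G * \<bar>y * (u \<bullet> x) - y * (w \<bullet> x)\<bar>"
    by (rule lipschitz_loss[OF assms(1,2)])
  also have "\<bar>y * (u \<bullet> x) - y * (w \<bullet> x)\<bar> = \<bar>y\<bar> * \<bar>(u - w) \<bullet> x\<bar>"
    by (simp add: abs_mult inner_diff_left right_diff_distrib[symmetric])
  also have "\<dots> \<le> 1 * (norm (u - w) * 1)"
  proof (intro mult_mono)
    show "\<bar>(u - w) \<bullet> x\<bar> \<le> norm (u - w) * 1"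
      by (rule order_trans[OF Cauchy_Schwarz_ineq2 mult_left_mono]) (use assms(3) in auto)
  qed (use assms in auto)
  finally show ?thesis using G by (simp add: mult_left_mono)
qed

lemma inner_sq_bound:
  fixes x v :: "real^'d"
  assumes "norm x \<le> 1"
  shows "(x \<bullet> v)\<^sup>2 \<le> (norm v)\<^sup>2"
proof -
  have "\<bar>x \<bullet> v\<bar> \<le> norm x * norm v" by (rule Cauchy_Schwarz_ineq2)
  also have "\<dots> \<le> 1 * norm v" by (rule mult_right_mono) (use assms in auto)
  finally have "\<bar>x \<bullet> v\<bar> \<le> norm v" by simp
  thus ?thesis by (metis abs_ge_zero power2_abs power_mono)
qed

theorem theorem5:
  fixes P :: "((real^'d) \<times> real) measure"
    and n :: nat and R \<alpha> G t :: real
    and loss dloss :: "real \<Rightarrow> real"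
    and wstar :: "real^'d"
    and what :: "(nat \<Rightarrow> (real^'d) \<times> real) \<Rightarrow> real^'d"
  assumes P: "prob_space P" "sets P = sets borel"
    and supp_x: "AE z in P. norm (fst z) \<le> 1"
    and supp_y: "AE z in P. snd z \<in> {-1..1}"
    and n: "n \<ge> 1"
    and R: "R > 0"
    and loss_nonneg: "\<And>z. loss z \<ge> 0"
    and loss_convex: "convex_on UNIV loss"
    and loss_expc: "exp_concave_on \<alpha> {-R..R} loss"
    and loss_deriv: "\<And>z. (loss has_real_derivative dloss z) (at z)"
    and loss_lip: "\<And>z. \<bar>dloss z\<bar> \<le> G"
    and wstar: "wstar \<in> cball 0 R" "\<And>w. w \<in> cball 0 R \<Longrightarrow> pop_risk P loss wstar \<le> pop_risk P loss w"
    and erm: "\<And>S. S \<in> space (PiM {..<n} (\<lambda>_. P)) \<Longrightarrow>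
                 what S \<in> cball 0 R \<and>
                 (\<forall>w \<in> cball 0 R. emp_risk n S loss (what S) \<le> emp_risk n S loss w)"
    and t: "t > 0"
  shows "\<exists>E \<in> sets (PiM {..<n} (\<lambda>_. P)).
           measure (PiM {..<n} (\<lambda>_. P)) E
             \<ge> 1 - 2 * real (nat \<lceil>ln (real n)\<rceil>) * exp (- t) \<and>
           (\<forall>S \<in> E.
              let tt = t + 2 + real CARD('d) * ln (real n);
                  rh = rho P R wstar (what S)
              in pop_risk P loss (what S) - pop_risk P loss wstar
                 \<le> G * R * (26 * (rh * sqrt (tt / real n) + tt / real n)
                            + 6 * rh * sqrt (tt / real n) + 2 * tt / real n)
                   + 3 * tt / real n)"
proof -
  interpret P: prob_space P by (rule P(1))
  define Q where "Q = PiM {..<n} (\<lambda>_. P)"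
  interpret Q: prob_space Q unfolding Q_def by (intro prob_space_PiM P(1))
  define tt where "tt = t + 2 + real CARD('d) * ln (real n)"
  have G: "G \<ge> 0" using loss_lip[of 0] by linarith
  have n0: "real n > 0" using n by simp
  have ln0: "ln (real n) \<ge> 0" using n by simp
  have tt2: "tt \<ge> t + 2" unfolding tt_def using ln0 by simp
  define good where "good = (\<lambda>z::(real^'d)\<times>real. norm (fst z) \<le> 1 \<and> \<bar>snd z\<bar> \<le> 1)"
  have goodAE: "AE z in P. good z" using supp_x supp_y by eventually_elim (auto simp: good_def)
  have good_pred[measurable]: "Measurable.pred P good"
    unfolding good_def by (intro pred_P[OF P(2)] closed_Collect_conj closed_Collect_le continuous_intros)
  have cont: "continuous_on UNIV loss"
    by (rule continuous_at_imp_continuous_on) (meson loss_deriv DERIV_isCont)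
  define lw where "lw = (\<lambda>(w::real^'d) (z::(real^'d)\<times>real). loss (snd z * (w \<bullet> fst z)))"
  have lw_meas[measurable]: "\<And>w. lw w \<in> borel_measurable P"
    unfolding lw_def by (intro meas_P[OF P(2)] continuous_on_compose2[OF cont] continuous_intros) auto
  have lw_bound: "AE z in P. \<bar>lw u z - lw w z\<bar> \<le> G * norm (u - w)" for u w
    using goodAE by eventually_elim (auto simp: lw_def good_def intro!: loss_comp_bound[OF loss_deriv loss_lip])
  have lw_int: "integrable P (lw w)" for w
  proof (rule P.integrable_const_bound[where B = "loss 0 + G * norm w"])
    show "AE z in P. norm (lw w z) \<le> loss 0 + G * norm w"
      using lw_bound[of w 0]
    proof eventually_elim
      case (elim z)
      have "lw 0 z = loss 0" by (simp add: lw_def)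
      thus ?case using elim loss_nonneg[of "snd z * (w \<bullet> fst z)"] by (simp add: lw_def)
    qed
  qed simp
  have pop: "pop_risk P loss w = (\<integral>z. lw w z \<partial>P)" for w by (simp add: pop_risk_def lw_def)
  have pop_diff: "pop_risk P loss u - pop_risk P loss w = (\<integral>z. lw u z - lw w z \<partial>P)" for u w
    unfolding pop using lw_int by simp
  have excess_le: "pop_risk P loss u - pop_risk P loss w \<le> G * norm (u - w)" for u w
  proof -
    have "(\<integral>z. lw u z - lw w z \<partial>P) \<le> (\<integral>z. G * norm (u - w) \<partial>P)"
      by (rule integral_mono_AE) (use lw_int lw_bound[of u w] in auto)
    thus ?thesis unfolding pop_diff by (simp add: P.prob_space)
  qed
  have what_ball: "norm (what S) \<le> R" if "S \<in> space Q" for S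
    using erm[of S] that unfolding Q_def by simp
  have rh0: "rho P R wstar w \<ge> 0" for w unfolding rho_def using R by simp
  show ?thesis
  proof (cases "G = 0 \<or> real n \<le> tt")
    case True
    show ?thesis unfolding Q_def[symmetric]
    proof (intro bexI[of _ "space Q"] conjI ballI)
      have m0: "0 \<le> 2 * real (nat \<lceil>ln (real n)\<rceil>) * exp (- t)" by simp
      show "measure Q (space Q) \<ge> 1 - 2 * real (nat \<lceil>ln (real n)\<rceil>) * exp (- t)"
        using m0 by (simp add: Q.prob_space)
      fix S assume S: "S \<in> space Q"
      define rh where "rh = rho P R wstar (what S)"
      define sq where "sq = sqrt (tt / real n)"
      have rh0': "rh \<ge> 0" unfolding rh_def by (rule rh0)
      have sq0: "sq \<ge> 0" unfolding sq_def using tt2 t n0 by simp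
      have ttn0: "tt / real n \<ge> 0" using tt2 t n0 by simp
      have "pop_risk P loss (what S) - pop_risk P loss wstar \<le> G * norm (what S - wstar)" by (rule excess_le)
      also have "\<dots> \<le> G * (2 * R)"
      proof (rule mult_left_mono[OF _ G])
        have "norm (what S - wstar) \<le> norm (what S) + norm wstar" by (rule norm_triangle_ineq4)
        thus "norm (what S - wstar) \<le> 2 * R" using what_ball[OF S] wstar(1) by simp
      qed
      also have "\<dots> \<le> G * R * (28 * (tt / real n))"
      proof (cases "G = 0")
        case False
        hence "1 \<le> tt / real n" using True n0 by simp
        hence "2 \<le> 28 * (tt / real n)" by simp
        hence "G * R * 2 \<le> G * R * (28 * (tt / real n))" using G R by (intro mult_left_mono) auto
        thus ?thesis by (simp add: mult.assoc)
      qed simp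
      also have "\<dots> \<le> G * R * (26 * (rh * sq + tt / real n) + 6 * rh * sq + 2 * tt / real n) + 3 * tt / real n"
      proof -
        have "0 \<le> G * R * (32 * (rh * sq))" using G R rh0' sq0 by simp
        moreover have "0 \<le> 3 * tt / real n" using ttn0 by simp
        ultimately show ?thesis by (simp add: algebra_simps)
      qed
      finally show "let tt = t + 2 + real CARD('d) * ln (real n); rh = rho P R wstar (what S)
              in pop_risk P loss (what S) - pop_risk P loss wstar
                 \<le> G * R * (26 * (rh * sqrt (tt / real n) + tt / real n)
                            + 6 * rh * sqrt (tt / real n) + 2 * tt / real n)
                   + 3 * tt / real n"
        unfolding Let_def tt_def[symmetric] rh_def[symmetric] sq_def[symmetric] .
    qed simp
  next
    case False
    hence G0: "G > 0" and ttn: "tt < real n" using G by auto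
    define u where "u = sqrt (tt / real n)"
    have ttpos: "tt > 0" using tt2 t by simp
    have u2: "u\<^sup>2 = tt / real n" unfolding u_def using ttpos n0 by simp
    have u0: "u \<ge> 0" unfolding u_def using ttpos n0 by (simp add: less_imp_le)
    have u1: "u \<le> 1" unfolding u_def using ttn n0 by simp
    have "real n > 2" using ttn tt2 t by linarith
    hence "n \<ge> 3" by linarith
    hence n3: "real n \<ge> 3" by simp
    have ln1: "ln (real n) \<ge> 1"
    proof -
      have "exp 1 \<le> real n" using exp_le n3 by linarith
      hence "ln (exp 1) \<le> ln (real n)" using n0 by (subst ln_le_cancel_iff) auto
      thus ?thesis by simp
    qed
    have d_le: "real CARD('d) \<le> tt"
    proof -
      have "real CARD('d) * 1 \<le> real CARD('d) * ln (real n)" using ln1 by (intro mult_left_mono) auto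
      thus ?thesis unfolding tt_def using t by linarith
    qed
    define \<delta> where "\<delta> = real CARD('d) * R / real n"
    have \<delta>0: "\<delta> \<ge> 0" unfolding \<delta>_def using R n0 by simp
    have \<delta>u: "\<delta> \<le> R * u\<^sup>2"
    proof -
      have "real CARD('d) * R \<le> tt * R" using d_le R by (intro mult_right_mono) auto
      thus ?thesis unfolding \<delta>_def u2 using n0 by (simp add: divide_right_mono mult.commute)
    qed
    have u21: "u\<^sup>2 \<le> 1" using u0 u1 by (simp add: power_le_one)
    have \<delta>R: "\<delta> \<le> R" using \<delta>u u21 R by (smt (verit) mult_left_le)
    define N where "N = {v \<in> (grid n R :: (real^'d) set). norm v \<le> R + \<delta>}"
    have Nfin: "finite N" unfolding N_def by (rule finite_subset[OF _ grid_finite]) auto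
    have Ncard: "card N \<le> n ^ CARD('d)"
    proof -
      have "card N \<le> card (grid n R :: (real^'d) set)" unfolding N_def using grid_finite[of n R] by (intro card_mono) auto
      thus ?thesis using grid_card[of n R, where 'd='d] by linarith
    qed
    define b where "b = 8 * G * R"
    have b0: "b > 0" unfolding b_def using G0 R by simp
    define f where "f = (\<lambda>v z. lw v z - lw wstar z)"
    define c where "c = (\<lambda>v. \<integral>z. f v z \<partial>P)"
    define X where "X = (\<lambda>v z. c v - f v z)"
    define q where "q = (\<lambda>v. \<integral>z. (fst z \<bullet> (v - wstar))\<^sup>2 \<partial>P)"
    define \<sigma> where "\<sigma> = (\<lambda>v. G * sqrt (q v))"
    have f_meas[measurable]: "f v \<in> borel_measurable P" for v unfolding f_def by measurable
    have X_meas[measurable]: "X v \<in> borel_measurable P" for v unfolding X_def by measurable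
    have f_int: "integrable P (f v)" for v unfolding f_def using lw_int by simp
    have sq_meas[measurable]: "(\<lambda>z. (fst z \<bullet> (v - wstar))\<^sup>2) \<in> borel_measurable P" for v
      by (intro meas_P[OF P(2)] continuous_intros)
    have sq_int: "integrable P (\<lambda>z. (fst z \<bullet> (v - wstar))\<^sup>2)" for v
    proof (rule P.integrable_const_bound[where B = "(norm (v - wstar))\<^sup>2"])
      show "AE z in P. norm ((fst z \<bullet> (v - wstar))\<^sup>2) \<le> (norm (v - wstar))\<^sup>2"
        using goodAE by eventually_elim (auto simp: good_def intro!: inner_sq_bound)
    qed simp
    have q0: "q v \<ge> 0" for v unfolding q_def by simp
    have f_bound: "AE z in P. \<bar>f v z\<bar> \<le> G * norm (v - wstar)" for v
      unfolding f_def by (rule lw_bound)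
    have f_sq: "AE z in P. (f v z)\<^sup>2 \<le> G\<^sup>2 * (fst z \<bullet> (v - wstar))\<^sup>2" for v
      using goodAE
    proof eventually_elim
      case (elim z)
      have l1: "\<bar>f v z\<bar> \<le> G * \<bar>snd z * (v \<bullet> fst z) - snd z * (wstar \<bullet> fst z)\<bar>"
        unfolding f_def lw_def by (rule lipschitz_loss[OF loss_deriv loss_lip])
      have "\<bar>snd z * (v \<bullet> fst z) - snd z * (wstar \<bullet> fst z)\<bar> = \<bar>snd z\<bar> * \<bar>fst z \<bullet> (v - wstar)\<bar>"
        by (simp add: abs_mult inner_diff_right inner_commute right_diff_distrib[symmetric])
      also have "\<dots> \<le> 1 * \<bar>fst z \<bullet> (v - wstar)\<bar>" using elim by (intro mult_right_mono) (auto simp: good_def)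
      finally have "G * \<bar>snd z * (v \<bullet> fst z) - snd z * (wstar \<bullet> fst z)\<bar> \<le> G * \<bar>fst z \<bullet> (v - wstar)\<bar>"
        using G by (intro mult_left_mono) auto
      with l1 have "\<bar>f v z\<bar> \<le> G * \<bar>fst z \<bullet> (v - wstar)\<bar>" by linarith
      hence "\<bar>f v z\<bar>\<^sup>2 \<le> (G * \<bar>fst z \<bullet> (v - wstar)\<bar>)\<^sup>2" by (intro power_mono) auto
      thus ?case by (simp add: power_mult_distrib)
    qed
    have fsq_int: "integrable P (\<lambda>z. (f v z)\<^sup>2)" for v
    proof (rule P.integrable_const_bound[where B = "(G * norm (v - wstar))\<^sup>2"])
      show "AE z in P. norm ((f v z)\<^sup>2) \<le> (G * norm (v - wstar))\<^sup>2"
        using f_bound[of v] by eventually_elim (simp, metis abs_ge_zero power2_abs power_mono)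
    qed simp
    have c_bound: "\<bar>c v\<bar> \<le> G * norm (v - wstar)" for v
    proof -
      have "c v \<le> (\<integral>z. G * norm (v - wstar) \<partial>P)" unfolding c_def
        by (rule integral_mono_AE) (use f_int f_bound[of v] in auto)
      moreover have "- c v \<le> (\<integral>z. G * norm (v - wstar) \<partial>P)"
      proof -
        have "(\<integral>z. - f v z \<partial>P) \<le> (\<integral>z. G * norm (v - wstar) \<partial>P)"
          by (rule integral_mono_AE) (use f_int f_bound[of v] in auto)
        thus ?thesis unfolding c_def by simp
      qed
      ultimately show ?thesis by (simp add: P.prob_space abs_le_iff)
    qed
    have tail: "measure Q {S \<in> space Q. real n * (2 * \<sigma> v * sqrt (tt / real n) + 2 * b * (tt / real n)) \<le> (\<Sum>i<n. X v (S i))} \<le> exp (- tt)"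
      if v: "v \<in> N" for v
    proof -
      have nv: "norm (v - wstar) \<le> 3 * R"
      proof -
        have "norm (v - wstar) \<le> norm v + norm wstar" by (rule norm_triangle_ineq4)
        thus ?thesis using v wstar(1) \<delta>R unfolding N_def by simp
      qed
      show ?thesis unfolding Q_def
      proof (rule tail_bound[OF P(1) X_meas _ b0 _ _ _ ttpos n])
        show "AE z in P. \<bar>X v z\<bar> \<le> b"
          using f_bound[of v]
        proof eventually_elim
          case (elim z)
          have "\<bar>X v z\<bar> \<le> \<bar>c v\<bar> + \<bar>f v z\<bar>" unfolding X_def by simp
          also have "\<dots> \<le> 2 * (G * norm (v - wstar))" using elim c_bound[of v] by simp
          also have "\<dots> \<le> 2 * (G * (3 * R))" using nv G by (intro mult_left_mono) auto
          also have "\<dots> \<le> b" unfolding b_def using G R by simp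
          finally show ?case .
        qed
        show "(\<integral>z. X v z \<partial>P) = 0" unfolding X_def c_def using f_int by (simp add: P.prob_space)
        show "0 \<le> \<sigma> v" unfolding \<sigma>_def by (intro mult_nonneg_nonneg G real_sqrt_ge_zero q0)
        show "(\<integral>z. (X v z)\<^sup>2 \<partial>P) \<le> (\<sigma> v)\<^sup>2"
        proof -
          have "(\<lambda>z. (X v z)\<^sup>2) = (\<lambda>z. (c v)\<^sup>2 - 2 * c v * f v z + (f v z)\<^sup>2)"
            unfolding X_def by (simp add: power2_eq_square algebra_simps)
          hence "(\<integral>z. (X v z)\<^sup>2 \<partial>P) = (c v)\<^sup>2 - 2 * c v * c v + (\<integral>z. (f v z)\<^sup>2 \<partial>P)"
            using f_int fsq_int by (simp add: P.prob_space c_def)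
          also have "\<dots> \<le> (\<integral>z. (f v z)\<^sup>2 \<partial>P)" by (simp add: power2_eq_square)
          also have "\<dots> \<le> (\<integral>z. G\<^sup>2 * (fst z \<bullet> (v - wstar))\<^sup>2 \<partial>P)"
            by (rule integral_mono_AE) (use fsq_int sq_int f_sq[of v] in auto)
          also have "\<dots> = (\<sigma> v)\<^sup>2" unfolding \<sigma>_def q_def using q0[of v] by (simp add: power_mult_distrib q_def)
          finally show ?thesis .
        qed
      qed
    qed
    define \<epsilon> where "\<epsilon> = (\<lambda>v. 2 * \<sigma> v * sqrt (tt / real n) + 2 * b * (tt / real n))"
    define A where "A = (\<lambda>v. {S \<in> space Q. real n * \<epsilon> v \<le> (\<Sum>i<n. X v (S i))})"
    define E' where "E' = {S \<in> space Q. \<forall>v\<in>N. (\<Sum>i<n. X v (S i)) < real n * \<epsilon> v}"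
    define E where "E = {S \<in> space Q. (\<forall>i<n. good (S i)) \<and> (\<forall>v\<in>N. (\<Sum>i<n. X v (S i)) < real n * \<epsilon> v)}"
    have A_sets: "A v \<in> sets Q" for v unfolding A_def Q_def by measurable
    have E'_sets: "E' \<in> sets Q" unfolding E'_def Q_def using Nfin by measurable
    have E_sets: "E \<in> sets Q" unfolding E_def Q_def using Nfin by measurable
    have AE_good: "AE S in Q. \<forall>i<n. good (S i)"
    proof -
      have "AE S in Q. \<forall>i\<in>{..<n}. good (S i)"
      proof (intro AE_finite_allI)
        fix i assume "i \<in> {..<n}"
        thus "AE S in Q. good (S i)" unfolding Q_def
          by (intro AE_PiM_component[where M="\<lambda>_. P" and P=good] P(1) goodAE)
      qed simp
      thus ?thesis by (rule eventually_mono) simp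
    qed
    have mE: "measure Q E = measure Q E'"
      by (rule Q.finite_measure_eq_AE[OF _ E_sets E'_sets]) (use AE_good in \<open>auto simp: E_def E'_def\<close>)
    have compl: "space Q - E' = (\<Union>v\<in>N. A v)" unfolding E'_def A_def by (auto simp: not_less)
    have "measure Q (space Q - E') \<le> (\<Sum>v\<in>N. measure Q (A v))"
      unfolding compl by (rule Q.finite_measure_subadditive_finite[OF Nfin]) (use A_sets in auto)
    also have "\<dots> \<le> (\<Sum>v\<in>N. exp (- tt))"
      by (rule sum_mono) (use tail in \<open>simp add: A_def \<epsilon>_def\<close>)
    also have "\<dots> = real (card N) * exp (- tt)" by simp
    also have "\<dots> \<le> real n ^ CARD('d) * exp (- tt)"
    proof -
      have "real (card N) \<le> real (n ^ CARD('d))" using Ncard by linarith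
      thus ?thesis by (intro mult_right_mono) auto
    qed
    also have "real n ^ CARD('d) * exp (- tt) = exp (- (t + 2))"
    proof -
      have "real n ^ CARD('d) = exp (real CARD('d) * ln (real n))"
        using n0 by (simp add: exp_of_nat_mult)
      hence "real n ^ CARD('d) * exp (- tt) = exp (real CARD('d) * ln (real n) + - tt)"
        by (simp add: exp_add[symmetric])
      also have "real CARD('d) * ln (real n) + - tt = - (t + 2)" unfolding tt_def by simp
      finally show ?thesis .
    qed
    also have "\<dots> \<le> 2 * real (nat \<lceil>ln (real n)\<rceil>) * exp (- t)"
    proof -
      have "1 \<le> real (nat \<lceil>ln (real n)\<rceil>)" using ln1 by linarith
      hence "1 * exp (- t) \<le> 2 * real (nat \<lceil>ln (real n)\<rceil>) * exp (- t)"
        by (intro mult_right_mono) auto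
      moreover have "exp (- (t + 2)) \<le> exp (- t)" by simp
      ultimately show ?thesis by linarith
    qed
    finally have mcompl: "measure Q (space Q - E') \<le> 2 * real (nat \<lceil>ln (real n)\<rceil>) * exp (- t)" .
    have mE_ge: "measure Q E \<ge> 1 - 2 * real (nat \<lceil>ln (real n)\<rceil>) * exp (- t)"
      using mcompl Q.prob_compl[OF E'_sets] mE by linarith
    show ?thesis unfolding Q_def[symmetric]
    proof (intro bexI[of _ E] conjI ballI)
      show "measure Q E \<ge> 1 - 2 * real (nat \<lceil>ln (real n)\<rceil>) * exp (- t)" by (rule mE_ge)
      show "E \<in> sets Q" by (rule E_sets)
      fix S assume SE: "S \<in> E"
      have S: "S \<in> space Q" and Sgood: "\<And>i. i < n \<Longrightarrow> good (S i)"
        and Sdev: "\<And>v. v \<in> N \<Longrightarrow> (\<Sum>i<n. X v (S i)) < real n * \<epsilon> v"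
        using SE unfolding E_def by auto
      define w where "w = what S"
      have wR: "norm w \<le> R" unfolding w_def by (rule what_ball[OF S])
      have erm_w: "emp_risk n S loss w \<le> emp_risk n S loss wstar"
        using erm[of S] S wstar(1) unfolding w_def Q_def by blast
      obtain v where vg: "v \<in> (grid n R :: (real^'d) set)" and wv: "norm (w - v) \<le> \<delta>"
        using grid_cover[OF n R wR] unfolding \<delta>_def by blast
      have vN: "v \<in> N"
      proof -
        have "norm v \<le> norm w + norm (w - v)" using norm_triangle_ineq4[of w "w - v"] by simp
        thus ?thesis using vg wR wv unfolding N_def by simp
      qed
      define rh where "rh = rho P R wstar w"
      have rh0': "rh \<ge> 0" unfolding rh_def by (rule rh0)
      have rh_q: "sqrt (q w) = 2 * R * rh" unfolding rh_def rho_def q_def using R by simp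
      have st1: "pop_risk P loss w - pop_risk P loss v \<le> G * \<delta>"
      proof -
        have "pop_risk P loss w - pop_risk P loss v \<le> G * norm (w - v)" by (rule excess_le)
        also have "\<dots> \<le> G * \<delta>" using wv G by (intro mult_left_mono) auto
        finally show ?thesis .
      qed
      have cv: "c v = pop_risk P loss v - pop_risk P loss wstar"
        unfolding c_def f_def pop_diff ..
      have sumX: "(\<Sum>i<n. X v (S i)) = real n * c v - (\<Sum>i<n. f v (S i))"
        unfolding X_def by (simp add: sum_subtractf)
      have sumf: "(\<Sum>i<n. f v (S i)) = real n * (emp_risk n S loss v - emp_risk n S loss wstar)"
        unfolding f_def lw_def emp_risk_def using n0 by (simp add: sum_subtractf right_diff_distrib)
      have emp_vw: "emp_risk n S loss v - emp_risk n S loss w \<le> G * \<delta>"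
      proof -
        have "emp_risk n S loss v - emp_risk n S loss w = (1 / real n) * (\<Sum>i<n. lw v (S i) - lw w (S i))"
          unfolding emp_risk_def lw_def by (simp add: sum_subtractf right_diff_distrib)
        also have "\<dots> \<le> (1 / real n) * (\<Sum>i<n. G * \<delta>)"
        proof (intro mult_left_mono sum_mono)
          fix i assume "i \<in> {..<n}"
          hence gi: "good (S i)" using Sgood by simp
          have "\<bar>lw v (S i) - lw w (S i)\<bar> \<le> G * norm (v - w)"
            unfolding lw_def using gi unfolding good_def by (intro loss_comp_bound[OF loss_deriv loss_lip]) auto
          also have "\<dots> \<le> G * \<delta>" using wv G by (intro mult_left_mono) (auto simp: norm_minus_commute)
          finally show "lw v (S i) - lw w (S i) \<le> G * \<delta>" by simp
        qed simp
        also have "\<dots> = G * \<delta>" using n0 by simp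
        finally show ?thesis .
      qed
      have cv_le: "c v < \<epsilon> v + G * \<delta>"
      proof -
        have "real n * c v < real n * \<epsilon> v + real n * (emp_risk n S loss v - emp_risk n S loss wstar)"
          using Sdev[OF vN] sumX sumf by linarith
        also have "\<dots> \<le> real n * \<epsilon> v + real n * (G * \<delta>)"
          using emp_vw erm_w n0 by (intro add_left_mono mult_left_mono) auto
        finally have "real n * c v < real n * (\<epsilon> v + G * \<delta>)" by (simp add: algebra_simps)
        thus ?thesis using n0 by simp
      qed
      have qv: "q v \<le> 2 * q w + 2 * \<delta>\<^sup>2"
      proof -
        have "q v \<le> (\<integral>z. 2 * (fst z \<bullet> (w - wstar))\<^sup>2 + 2 * \<delta>\<^sup>2 \<partial>P)"
          unfolding q_def
        proof (rule integral_mono_AE)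
          show "integrable P (\<lambda>z. 2 * (fst z \<bullet> (w - wstar))\<^sup>2 + 2 * \<delta>\<^sup>2)" using sq_int by simp
          show "AE z in P. (fst z \<bullet> (v - wstar))\<^sup>2 \<le> 2 * (fst z \<bullet> (w - wstar))\<^sup>2 + 2 * \<delta>\<^sup>2"
            using goodAE
          proof eventually_elim
            case (elim z)
            define a where "a = fst z \<bullet> (w - wstar)"
            define e where "e = fst z \<bullet> (v - w)"
            have ae: "fst z \<bullet> (v - wstar) = a + e" unfolding a_def e_def by (simp add: inner_diff_right)
            have "e\<^sup>2 \<le> (norm (v - w))\<^sup>2" unfolding e_def using elim by (intro inner_sq_bound) (auto simp: good_def)
            also have "\<dots> \<le> \<delta>\<^sup>2" using wv by (intro power_mono) (auto simp: norm_minus_commute)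
            finally have e2: "e\<^sup>2 \<le> \<delta>\<^sup>2" .
            have "(a + e)\<^sup>2 \<le> 2 * a\<^sup>2 + 2 * e\<^sup>2"
              using sum_squares_ge_zero[of "a - e" 0] by (simp add: power2_eq_square algebra_simps)
            thus ?case using ae e2 unfolding a_def by simp
          qed
        qed (rule sq_int)
        also have "\<dots> = 2 * q w + 2 * \<delta>\<^sup>2" unfolding q_def using sq_int by (simp add: P.prob_space)
        finally show ?thesis .
      qed
      have sqv: "sqrt (q v) \<le> sqrt 2 * (2 * R * rh) + sqrt 2 * \<delta>"
      proof -
        have "sqrt (q v) \<le> sqrt (2 * q w + 2 * \<delta>\<^sup>2)" using qv by simp
        also have "\<dots> \<le> sqrt (2 * q w) + sqrt (2 * \<delta>\<^sup>2)"
          by (rule sqrt_add_le_add_sqrt) (use q0 in auto)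
        also have "sqrt (2 * q w) = sqrt 2 * (2 * R * rh)" by (simp add: real_sqrt_mult rh_q)
        also have "sqrt (2 * \<delta>\<^sup>2) = sqrt 2 * \<delta>" using \<delta>0 by (simp add: real_sqrt_mult)
        finally show ?thesis .
      qed
      define sq where "sq = sqrt (tt / real n)"
      have sq_u: "sq = u" unfolding sq_def u_def ..
      have s2: "sqrt 2 \<le> (3/2::real)"
        by (rule real_le_lsqrt) (auto simp: power2_eq_square)
      have s20: "sqrt 2 \<ge> (0::real)" by simp
      have \<sigma>v: "\<sigma> v \<le> G * (sqrt 2 * (2 * R * rh) + sqrt 2 * \<delta>)"
        unfolding \<sigma>_def using sqv G by (intro mult_left_mono) auto
      have T1: "2 * (G * (sqrt 2 * (2 * R * rh))) * u \<le> 6 * (G * R * rh * u)"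
      proof -
        have "0 \<le> G * R * rh * u" using G R rh0' u0 by simp
        hence "sqrt 2 * (G * R * rh * u) \<le> 3/2 * (G * R * rh * u)" using s2 by (intro mult_right_mono) auto
        thus ?thesis by (simp add: algebra_simps)
      qed
      have T2: "2 * (G * (sqrt 2 * \<delta>)) * u \<le> 3 * (G * R * u\<^sup>2)"
      proof -
        have "\<delta> * u \<le> \<delta> * 1" using \<delta>0 u1 by (intro mult_left_mono) auto
        also have "\<dots> \<le> R * u\<^sup>2" using \<delta>u by simp
        finally have du: "\<delta> * u \<le> R * u\<^sup>2" .
        have "sqrt 2 * (\<delta> * u) \<le> 3/2 * (R * u\<^sup>2)"
          by (rule mult_mono[OF s2 du]) (use \<delta>0 u0 in auto)
        hence "G * (sqrt 2 * (\<delta> * u)) \<le> G * (3/2 * (R * u\<^sup>2))" using G by (intro mult_left_mono) auto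
        thus ?thesis by (simp add: algebra_simps)
      qed
      have T4: "G * \<delta> \<le> G * R * u\<^sup>2" using \<delta>u G by (simp add: mult_left_mono mult.assoc)
      have main: "pop_risk P loss w - pop_risk P loss wstar \<le> 2 * \<sigma> v * u + 2 * b * u\<^sup>2 + 2 * (G * \<delta>)"
      proof -
        have eps: "\<epsilon> v = 2 * \<sigma> v * u + 2 * b * u\<^sup>2" unfolding \<epsilon>_def u2 unfolding u_def ..
        show ?thesis using st1 cv cv_le eps by linarith
      qed
      have "2 * \<sigma> v * u \<le> 2 * (G * (sqrt 2 * (2 * R * rh) + sqrt 2 * \<delta>)) * u"
        using \<sigma>v u0 by (intro mult_right_mono) auto
      hence fin: "pop_risk P loss w - pop_risk P loss wstar \<le> 6 * (G * R * rh * u) + 21 * (G * R * u\<^sup>2)"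
      proof -
        have e1: "2 * (G * (sqrt 2 * (2 * R * rh) + sqrt 2 * \<delta>)) * u = 2 * (G * (sqrt 2 * (2 * R * rh))) * u + 2 * (G * (sqrt 2 * \<delta>)) * u"
          by (simp add: distrib_left distrib_right)
        have e2: "2 * b * u\<^sup>2 = 16 * (G * R * u\<^sup>2)" unfolding b_def by simp
        show ?thesis using main T1 T2 T4 e1 e2 \<open>2 * \<sigma> v * u \<le> 2 * (G * (sqrt 2 * (2 * R * rh) + sqrt 2 * \<delta>)) * u\<close> by linarith
      qed
      have ttn': "tt / real n = u\<^sup>2" using u2 by simp
      have "6 * (G * R * rh * u) + 21 * (G * R * u\<^sup>2)
            \<le> G * R * (26 * (rh * u + u\<^sup>2) + 6 * rh * u + 2 * u\<^sup>2) + 3 * u\<^sup>2"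
      proof -
        have "0 \<le> G * R * rh * u" using G R rh0' u0 by simp
        moreover have "0 \<le> G * R * u\<^sup>2" using G R by simp
        moreover have "0 \<le> u\<^sup>2" by simp
        moreover have "G * R * (26 * (rh * u + u\<^sup>2) + 6 * rh * u + 2 * u\<^sup>2) + 3 * u\<^sup>2
            = 32 * (G * R * rh * u) + 28 * (G * R * u\<^sup>2) + 3 * u\<^sup>2" by (simp add: algebra_simps)
        ultimately show ?thesis by linarith
      qed
      with fin have final: "pop_risk P loss w - pop_risk P loss wstar
            \<le> G * R * (26 * (rh * u + u\<^sup>2) + 6 * rh * u + 2 * u\<^sup>2) + 3 * u\<^sup>2" by linarith
      thus "let tt = t + 2 + real CARD('d) * ln (real n); rh = rho P R wstar (what S)
              in pop_risk P loss (what S) - pop_risk P loss wstar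
                 \<le> G * R * (26 * (rh * sqrt (tt / real n) + tt / real n)
                            + 6 * rh * sqrt (tt / real n) + 2 * tt / real n)
                   + 3 * tt / real n"
      proof -
        have a2: "2 * tt / real n = 2 * u\<^sup>2" and a3: "3 * tt / real n = 3 * u\<^sup>2" using ttn' by simp_all
        show ?thesis using final
          unfolding Let_def tt_def[symmetric] w_def[symmetric] rh_def[symmetric]
          unfolding u_def[symmetric] unfolding a2 a3 ttn' .
      qed
    qed
  qed
qed

end
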